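(* Let $d\geq 1$, $k\geq 1$, and let $\mu$ be a mass distribution on $\mathbb{R}^d$ with $\mu(\mathbb{R}^d)=1$. Then there exist $k$ points $p_1,\ldots,p_k$ in $\mathbb{R}^d$ whose generalized Tukey depth satisfies $\mathrm{gtd}_{\mu}(\{p_1,\ldots,p_k\})\geq\frac{1}{kd+1}$.
   Context: A mass distribution $\mu$ on $\mathbb{R}^d$ is a measure such that all open sets are measurable, $0<\mu(\mathbb{R}^d)<\infty$, and $\mu(S)=0$ for every lower-dimensional subset $S$. For a finite set $Q\subset\mathbb{R}^d$, letting $H$ denote the set of all closed halfspaces of $\mathbb{R}^d$, the generalized Tukey depth is $\mathrm{gtd}_{\mu}(Q)=\min_{h\in H,\ h\cap Q\neq\emptyset}\frac{\mu(h)}{|h\cap Q|}$. *)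

theory Defs
  imports "HOL-Analysis.Analysis"
begin

definition mass_distribution :: "'a::euclidean_space measure \<Rightarrow> bool" where
  "mass_distribution M \<longleftrightarrow>
     space M = UNIV \<and> sets borel \<subseteq> sets M \<and>
     0 < emeasure M UNIV \<and> emeasure M UNIV < \<infinity> \<and>
     (\<forall>S \<in> sets M. aff_dim S < int DIM('a) \<longrightarrow> emeasure M S = 0)"

definition closed_halfspaces :: "'a::euclidean_space set set" where
  "closed_halfspaces = {{x. a \<bullet> x \<le> b} | a b. a \<noteq> 0}"

text \<open>Generalized Tukey depth: min over closed halfspaces h meeting Q of mu(h)/|h \<inter> Q|
  (rendered as an infimum).\<close>
definition gtd :: "'a::euclidean_space measure \<Rightarrow> 'a set \<Rightarrow> real" where
  "gtd M Q = (INF h \<in> {h \<in> closed_halfspaces. h \<inter> Q \<noteq> {}}. measure M h / real (card (h \<inter> Q)))"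

end

theory Submission
  imports Defs
begin


definition bsl :: "'a::euclidean_space list" where
  "bsl = (SOME l. distinct l \<and> set l = Basis)"

lemma bsl: "distinct (bsl::'a::euclidean_space list) \<and> set (bsl::'a list) = Basis"
  unfolding bsl_def by (rule someI_ex) (use finite_distinct_list[OF finite_Basis] in auto)

definition lexfrom :: "nat \<Rightarrow> 'a::euclidean_space \<Rightarrow> bool" where
  "lexfrom n a \<longleftrightarrow> (\<exists>j. n \<le> j \<and> j < length (bsl::'a list) \<and>
      (\<forall>i. n \<le> i \<longrightarrow> i < j \<longrightarrow> a \<bullet> bsl!i = 0) \<and> a \<bullet> bsl!j > 0)"

definition lexpos :: "'a::euclidean_space \<Rightarrow> bool" where
  "lexpos a = lexfrom 0 a"

lemma lexpos_cases:
  fixes a :: "'a::euclidean_space"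
  assumes "a \<noteq> 0" shows "lexpos a \<or> lexpos (-a)"
proof -
  have "\<exists>j. j < length (bsl::'a list) \<and> a \<bullet> bsl!j \<noteq> 0"
  proof (rule ccontr)
    assume "\<not> ?thesis"
    then have "\<forall>u\<in>Basis. a \<bullet> u = 0" using bsl by (metis in_set_conv_nth)
    then show False using assms euclidean_all_zero_iff by blast
  qed
  then obtain j where j: "j < length (bsl::'a list)" "a \<bullet> bsl!j \<noteq> 0"
      "\<forall>i<j. \<not>(i < length (bsl::'a list) \<and> a \<bullet> bsl!i \<noteq> 0)"
    using exists_least_iff[where P="\<lambda>j. j < length (bsl::'a list) \<and> a \<bullet> bsl!j \<noteq> 0"] by blast
  then have z: "\<forall>i. 0 \<le> i \<longrightarrow> i < j \<longrightarrow> a \<bullet> bsl!i = 0" by auto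
  show ?thesis
  proof (cases "a \<bullet> bsl!j > 0")
    case True then show ?thesis unfolding lexpos_def lexfrom_def using j z by blast
  next
    case False
    then have "(-a) \<bullet> bsl!j > 0" using j by auto
    moreover have "\<forall>i. 0 \<le> i \<longrightarrow> i < j \<longrightarrow> (-a) \<bullet> bsl!i = 0" using z by auto
    ultimately show ?thesis unfolding lexpos_def lexfrom_def using j by blast
  qed
qed

lemma lexpos_excl:
  fixes a :: "'a::euclidean_space"
  shows "\<not> (lexpos a \<and> lexpos (-a))"
proof
  assume "lexpos a \<and> lexpos (-a)"
  then obtain j j' where j: "j < length (bsl::'a list)" "\<forall>i. i < j \<longrightarrow> a \<bullet> bsl!i = 0" "a \<bullet> bsl!j > 0"
    and j': "j' < length (bsl::'a list)" "\<forall>i. i < j' \<longrightarrow> (-a) \<bullet> bsl!i = 0" "(-a) \<bullet> bsl!j' > 0"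
    unfolding lexpos_def lexfrom_def by auto
  show False
  proof (cases j j' rule: linorder_cases)
    case less then show ?thesis using j j' by auto
  next
    case equal then show ?thesis using j j' by auto
  next
    case greater then show ?thesis using j j' by auto
  qed
qed

lemma finite_bounded_above:
  fixes f :: "'b \<Rightarrow> real"
  assumes "finite S" shows "\<exists>t. \<forall>x\<in>S. f x \<le> t"
  using assms by (intro exI[of _ "Max (insert 0 (f ` S))"]) auto

lemma lexfrom_escape:
  fixes A :: "('a::euclidean_space \<times> real) set"
  assumes "finite A" "\<forall>(a,b)\<in>A. lexfrom n a"
  shows "\<exists>z. \<forall>(a,b)\<in>A. b \<le> a \<bullet> z"
  using assms
proof (induction "length (bsl::'a list) - n" arbitrary: n A)
  case 0
  then have "A = {}" unfolding lexfrom_def by fastforce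
  then show ?case by auto
next
  case (Suc m)
  let ?e = "(bsl::'a list)!n"
  have nlt: "n < length (bsl::'a list)" using Suc.hyps(2) by linarith
  define A0 where "A0 = {(a,b)\<in>A. a \<bullet> ?e > 0}"
  define A1 where "A1 = {(a,b)\<in>A. \<not> a \<bullet> ?e > 0}"
  have A1: "\<forall>(a,b)\<in>A1. lexfrom (Suc n) a \<and> a \<bullet> ?e = 0"
  proof (clarify)
    fix a b assume ab: "(a,b) \<in> A1"
    then have "lexfrom n a" "\<not> a \<bullet> ?e > 0" using Suc.prems A1_def by auto
    then obtain j where j: "n \<le> j" "j < length (bsl::'a list)"
      "\<forall>i. n \<le> i \<longrightarrow> i < j \<longrightarrow> a \<bullet> bsl!i = 0" "a \<bullet> bsl!j > 0"
      unfolding lexfrom_def by auto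
    have "j \<noteq> n" using j \<open>\<not> a \<bullet> ?e > 0\<close> by auto
    then have "a \<bullet> ?e = 0" using j by auto
    moreover have "lexfrom (Suc n) a" unfolding lexfrom_def
      using j \<open>j \<noteq> n\<close> by (intro exI[of _ j]) auto
    ultimately show "lexfrom (Suc n) a \<and> a \<bullet> ?e = 0" by auto
  qed
  have "A1 \<subseteq> A" "A0 \<subseteq> A" unfolding A1_def A0_def by auto
  then have fA: "finite A1" "finite A0" using Suc.prems(1) finite_subset by auto
  have "\<exists>z. \<forall>(a,b)\<in>A1. b \<le> a \<bullet> z"
    by (rule Suc.hyps(1)[of "Suc n"]) (use Suc.hyps(2) fA A1 in auto)
  then obtain z0 where z0: "\<forall>(a,b)\<in>A1. b \<le> a \<bullet> z0" by auto
  from fA(2) obtain t where t: "\<forall>x\<in>A0. (\<lambda>(a,b). (b - a \<bullet> z0) / (a \<bullet> ?e)) x \<le> t"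
    using finite_bounded_above by blast
  show ?case
  proof (intro exI[of _ "z0 + t *\<^sub>R ?e"], clarify)
    fix a b assume ab: "(a,b) \<in> A"
    show "b \<le> a \<bullet> (z0 + t *\<^sub>R ?e)"
    proof (cases "a \<bullet> ?e > 0")
      case True
      then have "(a,b) \<in> A0" using ab A0_def by auto
      then have "(b - a \<bullet> z0) / (a \<bullet> ?e) \<le> t" using t by auto
      then have "b - a \<bullet> z0 \<le> t * (a \<bullet> ?e)" using True by (simp add: divide_le_eq)
      then show ?thesis by (simp add: inner_add_right)
    next
      case False
      then have "(a,b) \<in> A1" using ab A1_def by auto
      then have "b \<le> a \<bullet> z0" "a \<bullet> ?e = 0" using z0 A1 by auto
      then show ?thesis by (simp add: inner_add_right)
    qed
  qed
qed

lemma lexpos_escape: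
  fixes A :: "('a::euclidean_space \<times> real) set"
  assumes "finite A" "\<forall>(a,b)\<in>A. lexpos a"
  shows "\<exists>z. \<forall>(a,b)\<in>A. b \<le> a \<bullet> z"
  using lexfrom_escape[of A 0] assms unfolding lexpos_def by auto

lemma lexneg_escape:
  fixes A :: "('a::euclidean_space \<times> real) set"
  assumes "finite A" "\<forall>(a,b)\<in>A. lexpos (-a)"
  shows "\<exists>z. \<forall>(a,b)\<in>A. b \<le> a \<bullet> z"
proof -
  have "\<exists>z. \<forall>(a,b)\<in>(\<lambda>(a,b). (-a,b)) ` A. b \<le> a \<bullet> z"
    by (rule lexpos_escape) (use assms in auto)
  then obtain z where "\<forall>(a,b)\<in>(\<lambda>(a,b). (-a,b)) ` A. b \<le> a \<bullet> z" by blast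
  then show ?thesis by (intro exI[of _ "-z"]) auto
qed



locale md =
  fixes M :: "'a::euclidean_space measure" and k :: nat
  assumes sp: "space M = UNIV" and bor: "sets borel \<subseteq> sets M"
    and one: "emeasure M UNIV = 1"
    and hyp: "\<And>a b. a \<noteq> 0 \<Longrightarrow> measure M {z. a \<bullet> z = b} = 0"
    and kpos: "k \<ge> 1"
begin

sublocale finite_measure M
  by (rule finite_measureI) (simp add: sp one)

lemma muniv: "measure M UNIV = 1"
  using one by (simp add: measure_def)

lemma open_sets: "open S \<Longrightarrow> S \<in> sets M"
  using bor borel_open by blast

lemma closed_sets: "closed S \<Longrightarrow> S \<in> sets M"
  using bor borel_closed by blast

lemma lt_sets[simp]: "{z. a \<bullet> z < b} \<in> sets M"
  by (rule open_sets) (simp add: open_halfspace_lt)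

lemma le_sets[simp]: "{z. a \<bullet> z \<le> b} \<in> sets M"
  by (rule closed_sets) (simp add: closed_halfspace_le)

definition eps :: real where "eps = 1 / real (k * DIM('a) + 1)"

lemma eps_pos: "eps > 0" unfolding eps_def by (simp add: add_pos_nonneg)

lemma eps_sum: "real (k * DIM('a) + 1) * eps = 1" unfolding eps_def
  by (simp del: of_nat_add of_nat_mult)

definition th :: "nat \<Rightarrow> 'a \<Rightarrow> real" where
  "th j a = (if lexpos a then real (j+1) else real (k - j)) * eps"

lemma th_le: "j < k \<Longrightarrow> th j a \<le> real k * eps"
  unfolding th_def using eps_pos by (auto intro: mult_right_mono)

lemma th_ge: "j < k \<Longrightarrow> eps \<le> th j a"
  unfolding th_def using eps_pos by (auto intro: mult_right_mono)

definition Fam :: "nat \<Rightarrow> 'a set set" where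
  "Fam j = {{z. b \<le> a \<bullet> z} | a b. a \<noteq> 0 \<and> measure M {z. a \<bullet> z < b} < th j a}"

lemma core:
  assumes jk: "j < k" and T: "T \<subseteq> Fam j" "finite T" "card T \<le> DIM('a) + 1"
  shows "\<Inter>T \<noteq> {}"
proof
  assume empty: "\<Inter>T = {}"
  have "\<forall>F\<in>T. \<exists>p. F = {z. snd p \<le> fst p \<bullet> z} \<and> fst p \<noteq> 0 \<and> measure M {z. fst p \<bullet> z < snd p} < th j (fst p)"
    using T(1) unfolding Fam_def by fastforce
  then obtain R where R: "\<And>F. F \<in> T \<Longrightarrow> F = {z. snd (R F) \<le> fst (R F) \<bullet> z} \<and> fst (R F) \<noteq> 0
      \<and> measure M {z. fst (R F) \<bullet> z < snd (R F)} < th j (fst (R F))"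
    by metis
  define A where "A F = fst (R F)" for F
  define B where "B F = snd (R F)" for F
  have FR: "F = {z. B F \<le> A F \<bullet> z}" "A F \<noteq> 0" "measure M {z. A F \<bullet> z < B F} < th j (A F)"
    if "F \<in> T" for F using R[OF that] unfolding A_def B_def by auto
  have nocommon: "\<not> (\<forall>F\<in>T. B F \<le> A F \<bullet> z)" for z
  proof
    assume "\<forall>F\<in>T. B F \<le> A F \<bullet> z"
    then have "z \<in> \<Inter>T" using FR by auto
    then show False using empty by auto
  qed
  have fin: "finite ((\<lambda>F. (A F, B F)) ` T)" using T by auto
  obtain F1 where F1: "F1 \<in> T" "lexpos (A F1)"
  proof (rule ccontr)
    assume "\<not> thesis"
    with that have "\<forall>F\<in>T. \<not> lexpos (A F)" by blast
    then have "\<forall>(a,b)\<in>(\<lambda>F. (A F, B F)) ` T. lexpos (-a)" using FR lexpos_cases by fastforce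
    from lexneg_escape[OF fin this] nocommon show False by fastforce
  qed
  obtain F2 where F2: "F2 \<in> T" "\<not> lexpos (A F2)"
  proof (rule ccontr)
    assume "\<not> thesis"
    with that have "\<forall>(a,b)\<in>(\<lambda>F. (A F, B F)) ` T. lexpos a" by fastforce
    from lexpos_escape[OF fin this] nocommon show False by fastforce
  qed
  have F12: "F1 \<noteq> F2" using F1 F2 by auto
  define m where "m F = measure M {z. A F \<bullet> z < B F}" for F
  have "UNIV = (\<Union>F\<in>T. {z. A F \<bullet> z < B F})"
    using nocommon by (auto simp: not_le)
  then have "1 \<le> (\<Sum>F\<in>T. m F)"
    using finite_measure_subadditive_finite[of T "\<lambda>F. {z. A F \<bullet> z < B F}"] T(2) muniv
    unfolding m_def by (auto simp: image_subset_iff)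
  also have "(\<Sum>F\<in>T. m F) = m F1 + m F2 + (\<Sum>F\<in>T - {F1,F2}. m F)"
  proof -
    have "(\<Sum>F\<in>T. m F) = m F1 + (\<Sum>F\<in>T - {F1}. m F)"
      using T(2) F1 by (simp add: sum.remove)
    also have "(\<Sum>F\<in>T - {F1}. m F) = m F2 + (\<Sum>F\<in>T - {F1} - {F2}. m F)"
      using T(2) F2 F12 by (subst sum.remove[of _ F2]) auto
    finally show ?thesis by (simp add: Diff_insert2[symmetric] add.assoc)
  qed
  also have "\<dots> < real (j+1) * eps + real (k - j) * eps + real (DIM('a) - 1) * (real k * eps)"
  proof -
    have "m F1 < real (j+1) * eps" using FR(3)[OF F1(1)] F1(2) unfolding m_def th_def by simp
    moreover have "m F2 < real (k-j) * eps" using FR(3)[OF F2(1)] F2(2) unfolding m_def th_def by simp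
    moreover have "(\<Sum>F\<in>T - {F1,F2}. m F) \<le> real (card (T - {F1,F2})) * (real k * eps)"
    proof -
      have "(\<Sum>F\<in>T - {F1,F2}. m F) \<le> (\<Sum>F\<in>T - {F1,F2}. real k * eps)"
        using FR(3) th_le[OF jk] unfolding m_def by (intro sum_mono) (meson DiffD1 less_le_trans less_imp_le)
      then show ?thesis by simp
    qed
    moreover have "real (card (T - {F1,F2})) \<le> real (DIM('a) - 1)"
    proof -
      have "card (T - {F1,F2}) = card T - 2" using F1 F2 F12 T(2) by (simp add: card_Diff_subset)
      moreover have "card T - 2 \<le> DIM('a) - 1" using T(3) by linarith
      ultimately show ?thesis by (simp only: of_nat_le_iff)
    qed
    moreover have "0 \<le> real k * eps" using eps_pos by simp
    ultimately show ?thesis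
      by (smt (verit, best) mult_right_mono)
  qed
  also have "\<dots> = 1"
  proof -
    have "real (j+1) * eps + real (k - j) * eps + real (DIM('a) - 1) * (real k * eps)
        = (real (j+1) + real (k-j) + real (DIM('a) - 1) * real k) * eps" by (simp add: algebra_simps)
    also have "real (j+1) + real (k-j) + real (DIM('a) - 1) * real k = real (k * DIM('a) + 1)"
      using jk DIM_positive[where 'a='a] by (simp add: of_nat_diff algebra_simps)
    finally show ?thesis using eps_sum by simp
  qed
  finally show False by simp
qed

lemma finite_int:
  assumes jk: "j < k" and T: "T \<subseteq> Fam j" "finite T"
  shows "\<Inter>T \<noteq> {}"
proof (cases "card T \<le> DIM('a) + 1")
  case True then show ?thesis using core[OF jk T] by blast
next
  case False
  show ?thesis
  proof (rule Helly)
    show "DIM('a) + 1 \<le> card T" using False by simp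
    show "\<forall>s\<in>T. convex s" using T(1) unfolding Fam_def by (auto simp: convex_halfspace_ge)
    show "\<Inter>t \<noteq> {}" if "t \<subseteq> T" "card t = DIM('a) + 1" for t
    proof (rule core[OF jk])
      show "t \<subseteq> Fam j" using that T by auto
      show "finite t" using that T finite_subset by auto
    qed (use that in auto)
  qed
qed

lemma exists_R:
  "\<exists>N::nat. \<forall>v\<in>Basis \<union> uminus ` Basis. measure M {z. (v::'a) \<bullet> z < - real N} < eps"
proof -
  have "\<forall>v\<in>Basis \<union> uminus ` (Basis::'a set). eventually (\<lambda>N. measure M {z. v \<bullet> z < - real N} < eps) sequentially"
  proof
    fix v :: 'a
    have "(\<lambda>n. measure M {z. v \<bullet> z < - real n}) \<longlonglongrightarrow> measure M (\<Inter>n. {z. v \<bullet> z < - real n})"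
      by (rule finite_Lim_measure_decseq) (auto simp: decseq_def)
    moreover have "(\<Inter>n. {z. v \<bullet> z < - real n}) = {}"
    proof -
      have "\<exists>n. \<not> v \<bullet> z < - real n" for z
        using reals_Archimedean2[of "- (v \<bullet> z)"] by (metis less_imp_le minus_less_iff not_less)
      then show ?thesis by auto
    qed
    ultimately have "(\<lambda>n. measure M {z. v \<bullet> z < - real n}) \<longlonglongrightarrow> 0" by simp
    then show "eventually (\<lambda>N. measure M {z. v \<bullet> z < - real N} < eps) sequentially"
      using eps_pos by (simp add: order_tendsto_iff)
  qed
  then have "eventually (\<lambda>N. \<forall>v\<in>Basis \<union> uminus ` (Basis::'a set). measure M {z. v \<bullet> z < - real N} < eps) sequentially"
    by (intro eventually_ball_finite) auto
  then show ?thesis by (auto simp: eventually_sequentially)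
qed

lemma exists_point:
  assumes jk: "j < k"
  shows "\<exists>p. p \<in> \<Inter>(Fam j)"
proof -
  obtain N :: nat where N: "\<forall>v\<in>Basis \<union> uminus ` Basis. measure M {z. (v::'a) \<bullet> z < - real N} < eps"
    using exists_R by blast
  define Bs where "Bs = (\<lambda>v. {z. - real N \<le> (v::'a) \<bullet> z}) ` (Basis \<union> uminus ` Basis)"
  have BsF: "Bs \<subseteq> Fam j"
  proof
    fix S assume "S \<in> Bs"
    then obtain v where v: "v \<in> Basis \<union> uminus ` Basis" "S = {z. - real N \<le> v \<bullet> z}"
      unfolding Bs_def by auto
    have "v \<noteq> 0" using v(1) by auto
    moreover have "measure M {z. v \<bullet> z < - real N} < th j v"
    proof -
      have "measure M {z. v \<bullet> z < - real N} < eps" using N v(1) by blast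
      then show ?thesis using th_ge[OF jk, of v] by linarith
    qed
    ultimately show "S \<in> Fam j" unfolding Fam_def using v(2) by blast
  qed
  have finBs: "finite Bs" unfolding Bs_def by auto
  have sub: "\<Inter>Bs \<subseteq> cbox (- real N *\<^sub>R One) (real N *\<^sub>R One)"
  proof
    fix z assume z: "z \<in> \<Inter>Bs"
    have "- real N \<le> z \<bullet> i \<and> z \<bullet> i \<le> real N" if "i \<in> Basis" for i
    proof -
      have "-i \<in> Basis \<union> uminus ` Basis" "i \<in> Basis \<union> uminus ` Basis" using that by auto
      then have "z \<in> {z. - real N \<le> i \<bullet> z}" "z \<in> {z. - real N \<le> (-i) \<bullet> z}"
        using z unfolding Bs_def by blast+
      then show ?thesis by (auto simp: inner_commute)
    qed
    then show "z \<in> cbox (- real N *\<^sub>R One) (real N *\<^sub>R One)"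
      by (auto simp: mem_box)
  qed
  have "cbox (- real N *\<^sub>R One) (real N *\<^sub>R One) \<inter> \<Inter>(Fam j) \<noteq> {}"
  proof (rule compact_imp_fip)
    show "closed T" if "T \<in> Fam j" for T
      using that unfolding Fam_def by (auto simp: closed_halfspace_ge)
    show "cbox (- real N *\<^sub>R One) (real N *\<^sub>R One) \<inter> \<Inter>F' \<noteq> {}" if "finite F'" "F' \<subseteq> Fam j" for F'
    proof -
      have "\<Inter>(F' \<union> Bs) \<noteq> {}" using finite_int[OF jk, of "F' \<union> Bs"] that BsF finBs by auto
      moreover have "\<Inter>(F' \<union> Bs) \<subseteq> cbox (- real N *\<^sub>R One) (real N *\<^sub>R One) \<inter> \<Inter>F'"
        using sub by auto
      ultimately show ?thesis by blast
    qed
  qed simp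
  then show ?thesis by blast
qed

lemma point_depth:
  assumes p: "p \<in> \<Inter>(Fam j)" and a: "a \<noteq> 0" and ab: "a \<bullet> p \<le> b"
  shows "th j a \<le> measure M {z. a \<bullet> z \<le> b}"
proof (rule ccontr)
  assume "\<not> ?thesis"
  then have lt: "measure M {z. a \<bullet> z \<le> b} < th j a" by simp
  have "(\<lambda>n. measure M {z. a \<bullet> z < b + 1 / Suc n}) \<longlonglongrightarrow> measure M (\<Inter>n. {z. a \<bullet> z < b + 1 / Suc n})"
  proof (rule finite_Lim_measure_decseq)
    show "decseq (\<lambda>n. {z. a \<bullet> z < b + 1 / real (Suc n)})"
    proof (rule decseq_SucI, clarify)
      fix n z assume "a \<bullet> z < b + 1 / real (Suc (Suc n))"
      moreover have "1 / real (Suc (Suc n)) \<le> 1 / real (Suc n)" by (simp add: frac_le)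
      ultimately show "a \<bullet> z < b + 1 / real (Suc n)" by linarith
    qed
  qed auto
  moreover have "(\<Inter>n. {z. a \<bullet> z < b + 1 / Suc n}) = {z. a \<bullet> z \<le> b}"
  proof (safe)
    fix z assume "z \<in> (\<Inter>n. {z. a \<bullet> z < b + 1 / Suc n})"
    then have h: "a \<bullet> z < b + 1 / Suc n" for n by auto
    show "a \<bullet> z \<le> b"
    proof (rule ccontr)
      assume "\<not> a \<bullet> z \<le> b"
      then have "a \<bullet> z - b > 0" by simp
      then obtain n where "1 / Suc n < a \<bullet> z - b" using nat_approx_posE by blast
      with h[of n] show False by simp
    qed
  next
    fix z n assume "a \<bullet> z \<le> b"
    then show "a \<bullet> z < b + 1 / Suc n" by (smt (verit) divide_pos_pos of_nat_0_less_iff zero_less_Suc)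
  qed
  ultimately have "(\<lambda>n. measure M {z. a \<bullet> z < b + 1 / Suc n}) \<longlonglongrightarrow> measure M {z. a \<bullet> z \<le> b}" by simp
  then have "eventually (\<lambda>n. measure M {z. a \<bullet> z < b + 1 / Suc n} < th j a) sequentially"
    using lt by (simp add: order_tendsto_iff)
  then obtain n where n: "measure M {z. a \<bullet> z < b + 1 / Suc n} < th j a"
    by (auto simp: eventually_sequentially)
  then have "{z. b + 1 / Suc n \<le> a \<bullet> z} \<in> Fam j" unfolding Fam_def using a by blast
  then have "b + 1 / Suc n \<le> a \<bullet> p" using p by auto
  then show False using ab by (smt (verit) divide_pos_pos of_nat_0_less_iff zero_less_Suc)
qed

definition Prop :: "(nat \<Rightarrow> 'a) \<Rightarrow> bool" where
  "Prop p \<longleftrightarrow> (\<forall>a b. a \<noteq> 0 \<longrightarrow>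
      eps * real (card {l. l < k \<and> a \<bullet> p l \<le> b}) \<le> measure M {z. a \<bullet> z \<le> b})"

lemma prop_exists: "\<exists>p. Prop p"
proof -
  have "\<forall>j. \<exists>p. j < k \<longrightarrow> p \<in> \<Inter>(Fam j)" using exists_point by blast
  then obtain p where p: "\<And>j. j < k \<Longrightarrow> p j \<in> \<Inter>(Fam j)" by metis
  have "Prop p" unfolding Prop_def
  proof (intro allI impI)
    fix a :: 'a and b assume a: "a \<noteq> 0"
    define J where "J = {l. l < k \<and> a \<bullet> p l \<le> b}"
    have finJ: "finite J" unfolding J_def by auto
    show "eps * real (card {l. l < k \<and> a \<bullet> p l \<le> b}) \<le> measure M {z. a \<bullet> z \<le> b}"
    proof (cases "J = {}")
      case True then show ?thesis unfolding J_def[symmetric] by simp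
    next
      case False
      show ?thesis
      proof (cases "lexpos a")
        case True
        define m where "m = Max J"
        have mJ: "m \<in> J" using Max_in[OF finJ False] m_def by simp
        then have mk: "m < k" "a \<bullet> p m \<le> b" unfolding J_def by auto
        have "th m a \<le> measure M {z. a \<bullet> z \<le> b}" by (rule point_depth[OF p[OF mk(1)] a mk(2)])
        moreover have "th m a = real (m+1) * eps" unfolding th_def using True by simp
        moreover have "card J \<le> m + 1"
        proof -
          have "J \<subseteq> {..m}" using Max_ge[OF finJ] m_def by auto
          then show ?thesis using card_mono[of "{..m}" J] by simp
        qed
        ultimately show ?thesis unfolding J_def[symmetric] using eps_pos
          by (smt (verit, ccfv_SIG) mult.commute mult_right_mono of_nat_le_iff)
      next
        case False': False
        define m where "m = Min J"
        have mJ: "m \<in> J" using Min_in[OF finJ False] m_def by simp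
        then have mk: "m < k" "a \<bullet> p m \<le> b" unfolding J_def by auto
        have "th m a \<le> measure M {z. a \<bullet> z \<le> b}" by (rule point_depth[OF p[OF mk(1)] a mk(2)])
        moreover have "th m a = real (k - m) * eps" unfolding th_def using False' by simp
        moreover have "card J \<le> k - m"
        proof -
          have "J \<subseteq> {m..<k}" using Min_le[OF finJ] m_def unfolding J_def by auto
          then show ?thesis using card_mono[of "{m..<k}" J] by simp
        qed
        ultimately show ?thesis unfolding J_def[symmetric] using eps_pos
          by (smt (verit, ccfv_SIG) mult.commute mult_right_mono of_nat_le_iff)
      qed
    qed
  qed
  then show ?thesis by blast
qed

lemma slab_closed: "closed {z. \<bar>a \<bullet> (z - x)\<bar> \<le> t}"
  by (intro closed_Collect_le continuous_intros)

lemma slab: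
  assumes c: "c > 0"
  shows "\<exists>t>0. \<forall>a. norm a = 1 \<longrightarrow> measure M {z. \<bar>a \<bullet> (z - x)\<bar> \<le> t} < c"
proof -
  have "(\<lambda>n. measure M (cball x (real n))) \<longlonglongrightarrow> measure M (\<Union>n. cball x (real n))"
    by (rule finite_Lim_measure_incseq) (auto simp: incseq_def intro: closed_sets)
  moreover have "(\<Union>n. cball x (real n)) = UNIV"
  proof -
    have "\<exists>n. dist x z \<le> real n" for z using real_arch_simple by blast
    then show ?thesis by auto
  qed
  ultimately have "(\<lambda>n. measure M (cball x (real n))) \<longlonglongrightarrow> 1" using muniv by simp
  then have "eventually (\<lambda>n. measure M (cball x (real n)) > 1 - c/2) sequentially"
    using c by (simp add: order_tendsto_iff)
  then obtain n where n: "measure M (cball x (real (Suc n))) > 1 - c/2"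
    by (auto simp: eventually_sequentially) (metis le_add2 of_nat_Suc plus_1_eq_Suc)
  define R where "R = real (Suc n)"
  have R: "R > 0" unfolding R_def by simp
  have out: "measure M (- cball x R) < c/2"
  proof -
    have "measure M (UNIV - cball x R) = measure M UNIV - measure M (cball x R)"
      using finite_measure_compl[of "cball x R"] sp closed_sets by auto
    then show ?thesis using n muniv unfolding R_def by (simp add: Compl_eq_Diff_UNIV)
  qed
  have eta: "\<exists>e>0. measure M {z. \<bar>u \<bullet> (z - x)\<bar> \<le> 2 * e} < c/2" if u: "norm u = 1" for u :: 'a
  proof -
    have "(\<lambda>n. measure M {z. \<bar>u \<bullet> (z - x)\<bar> \<le> 1 / Suc n}) \<longlonglongrightarrow> measure M (\<Inter>n. {z. \<bar>u \<bullet> (z - x)\<bar> \<le> 1 / Suc n})"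
    proof (rule finite_Lim_measure_decseq)
      show "range (\<lambda>n. {z. \<bar>u \<bullet> (z - x)\<bar> \<le> 1 / real (Suc n)}) \<subseteq> sets M"
        using slab_closed closed_sets by auto
      show "decseq (\<lambda>n. {z. \<bar>u \<bullet> (z - x)\<bar> \<le> 1 / real (Suc n)})"
      proof (rule decseq_SucI, clarify)
        fix n z assume "\<bar>u \<bullet> (z - x)\<bar> \<le> 1 / real (Suc (Suc n))"
        moreover have "1 / real (Suc (Suc n)) \<le> 1 / real (Suc n)" by (simp add: frac_le)
        ultimately show "\<bar>u \<bullet> (z - x)\<bar> \<le> 1 / real (Suc n)" by linarith
      qed
    qed
    moreover have "(\<Inter>n. {z. \<bar>u \<bullet> (z - x)\<bar> \<le> 1 / Suc n}) = {z. u \<bullet> z = u \<bullet> x}"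
    proof (safe)
      fix z assume "z \<in> (\<Inter>n. {z. \<bar>u \<bullet> (z - x)\<bar> \<le> 1 / Suc n})"
      then have h: "\<bar>u \<bullet> (z - x)\<bar> \<le> 1 / Suc n" for n by auto
      show "u \<bullet> z = u \<bullet> x"
      proof (rule ccontr)
        assume "u \<bullet> z \<noteq> u \<bullet> x"
        then have "\<bar>u \<bullet> (z - x)\<bar> > 0" by (simp add: inner_diff_right)
        then obtain n where "1 / Suc n < \<bar>u \<bullet> (z - x)\<bar>" using nat_approx_posE by blast
        with h[of n] show False by simp
      qed
    qed (simp add: inner_diff_right)
    moreover have "u \<noteq> 0" using u by auto
    then have "measure M {z. u \<bullet> z = u \<bullet> x} = 0" by (rule hyp)
    ultimately have "(\<lambda>n. measure M {z. \<bar>u \<bullet> (z - x)\<bar> \<le> 1 / Suc n}) \<longlonglongrightarrow> 0" by simp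
    then have "eventually (\<lambda>n. measure M {z. \<bar>u \<bullet> (z - x)\<bar> \<le> 1 / Suc n} < c/2) sequentially"
      using c by (intro order_tendstoD(2)) auto
    then obtain n where "measure M {z. \<bar>u \<bullet> (z - x)\<bar> \<le> 1 / Suc n} < c/2"
      by (auto simp: eventually_sequentially)
    moreover have "2 * (1 / (2 * real (Suc n))) = 1 / real (Suc n)" by (simp add: field_simps)
    ultimately show ?thesis
      by (intro exI[of _ "1 / (2 * real (Suc n))"]) (simp only:, simp)
  qed
  then obtain E where E: "\<And>u. norm u = 1 \<Longrightarrow> E u > 0 \<and> measure M {z. \<bar>u \<bullet> (z - x)\<bar> \<le> 2 * E u} < c/2"
    by metis
  have "compact (sphere (0::'a) 1)" by simp
  then obtain D where D: "D \<subseteq> sphere 0 1" "finite D" "sphere 0 1 \<subseteq> (\<Union>u\<in>D. ball u (E u / R))"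
    by (rule compactE_image[of _ _ "\<lambda>u. ball u (E u / R)"]) (use E R in auto)
  have "D \<noteq> {}"
  proof
    assume "D = {}"
    obtain u :: 'a where "u \<in> Basis" using nonempty_Basis by blast
    then have "u \<in> sphere 0 1" by simp
    then show False using D \<open>D = {}\<close> by auto
  qed
  define t where "t = Min (E ` D)"
  have tpos: "t > 0" unfolding t_def using D \<open>D \<noteq> {}\<close> E by (subst Min_gr_iff) auto
  have tle: "t \<le> E u" if "u \<in> D" for u unfolding t_def using D that by auto
  show ?thesis
  proof (intro exI[of _ t] conjI allI impI tpos)
    fix a :: 'a assume a: "norm a = 1"
    then obtain u where u: "u \<in> D" "dist u a < E u / R" using D by force
    have un: "norm u = 1" using u D by auto
    have "{z. \<bar>a \<bullet> (z - x)\<bar> \<le> t} \<subseteq> {z. \<bar>u \<bullet> (z - x)\<bar> \<le> 2 * E u} \<union> - cball x R"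
    proof
      fix z assume z: "z \<in> {z. \<bar>a \<bullet> (z - x)\<bar> \<le> t}"
      show "z \<in> {z. \<bar>u \<bullet> (z - x)\<bar> \<le> 2 * E u} \<union> - cball x R"
      proof (cases "z \<in> cball x R")
        case True
        then have nz: "norm (z - x) \<le> R" by (simp add: dist_norm norm_minus_commute)
        have "\<bar>(u - a) \<bullet> (z - x)\<bar> \<le> norm (u - a) * norm (z - x)" by (rule Cauchy_Schwarz_ineq2)
        also have "\<dots> \<le> (E u / R) * R"
          using u(2) nz by (intro mult_mono) (auto simp: dist_norm intro: order.trans[OF norm_ge_zero] less_imp_le)
        also have "\<dots> = E u" using R by simp
        finally have "\<bar>(u - a) \<bullet> (z - x)\<bar> \<le> E u" .
        moreover have "u \<bullet> (z - x) = a \<bullet> (z - x) + (u - a) \<bullet> (z - x)" by (simp add: inner_diff_left)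
        moreover have "\<bar>a \<bullet> (z - x)\<bar> \<le> E u" using z tle[OF u(1)] by auto
        ultimately show ?thesis by auto
      qed auto
    qed
    then have "measure M {z. \<bar>a \<bullet> (z - x)\<bar> \<le> t} \<le> measure M ({z. \<bar>u \<bullet> (z - x)\<bar> \<le> 2 * E u} \<union> - cball x R)"
    proof (rule finite_measure_mono)
      show "{z. \<bar>u \<bullet> (z - x)\<bar> \<le> 2 * E u} \<union> - cball x R \<in> sets M"
        by (rule sets.Un[OF closed_sets[OF slab_closed] open_sets]) (simp add: open_Compl)
    qed
    also have "\<dots> \<le> measure M {z. \<bar>u \<bullet> (z - x)\<bar> \<le> 2 * E u} + measure M (- cball x R)"
      by (rule measure_Un_le[OF closed_sets[OF slab_closed] open_sets]) (simp add: open_Compl)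
    also have "\<dots> < c/2 + c/2" using E[OF un] out by linarith
    finally show "measure M {z. \<bar>a \<bullet> (z - x)\<bar> \<le> t} < c" by simp
  qed
qed

lemma perturb:
  assumes P: "Prop p" and ij: "i < k" "j < k" "i \<noteq> j" "p i = p j"
  shows "\<exists>q. Prop q \<and> card (q ` {..<k}) = Suc (card (p ` {..<k}))"
proof -
  define x where "x = p j"
  obtain t where t: "t > 0" "\<And>a. norm a = 1 \<Longrightarrow> measure M {z. \<bar>a \<bullet> (z - x)\<bar> \<le> t} < eps"
    using slab[OF eps_pos, of x] by blast
  obtain u :: 'a where u: "u \<in> Basis" using nonempty_Basis by blast
  have nu: "norm u = 1" using u by simp
  define bad where "bad = (\<lambda>y. (y - x) \<bullet> u) ` (p ` {..<k})"
  have "finite bad" unfolding bad_def by auto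
  moreover have "infinite {0<..<t}" using t(1) by (simp add: infinite_Ioo)
  ultimately have "infinite ({0<..<t} - bad)" by (rule Diff_infinite_finite)
  then obtain s where s: "s \<in> {0<..<t}" "s \<notin> bad" using infinite_imp_nonempty by blast
  define y where "y = x + s *\<^sub>R u"
  have ynot: "y \<notin> p ` {..<k}"
  proof
    assume "y \<in> p ` {..<k}"
    then have "(y - x) \<bullet> u \<in> bad" unfolding bad_def by blast
    moreover have "(y - x) \<bullet> u = s" unfolding y_def using u by (simp add: inner_Basis)
    ultimately show False using s by simp
  qed
  define q where "q = p(j := y)"
  have img: "q ` {..<k} = insert y (p ` {..<k})"
  proof -
    have "q ` {..<k} = insert y (p ` ({..<k} - {j}))" unfolding q_def using ij by auto
    moreover have "p ` ({..<k} - {j}) = p ` {..<k}"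
    proof
      show "p ` {..<k} \<subseteq> p ` ({..<k} - {j})"
      proof
        fix w assume "w \<in> p ` {..<k}"
        then obtain l where l: "l < k" "w = p l" by auto
        show "w \<in> p ` ({..<k} - {j})"
        proof (cases "l = j")
          case True then show ?thesis using ij l by (metis DiffI image_eqI lessThan_iff singletonD)
        qed (use l in auto)
      qed
    qed auto
    ultimately show ?thesis by simp
  qed
  have cardq: "card (q ` {..<k}) = Suc (card (p ` {..<k}))"
    using img ynot by simp
  have "Prop q" unfolding Prop_def
  proof (intro allI impI)
    fix a :: 'a and b assume a: "a \<noteq> 0"
    define Jq where "Jq = {l. l < k \<and> a \<bullet> q l \<le> b}"
    define Jp where "Jp = {l. l < k \<and> a \<bullet> p l \<le> b}"
    have finJp: "finite Jp" unfolding Jp_def by auto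
    have Pp: "eps * real (card Jp) \<le> measure M {z. a \<bullet> z \<le> b}"
      using P a unfolding Prop_def Jp_def by blast
    show "eps * real (card Jq) \<le> measure M {z. a \<bullet> z \<le> b}"
    proof (cases "a \<bullet> x \<le> b \<or> \<not> a \<bullet> y \<le> b")
      case True
      then have "Jq \<subseteq> Jp" unfolding Jq_def Jp_def q_def x_def by auto
      then have "card Jq \<le> card Jp" using finJp card_mono by blast
      then have "eps * real (card Jq) \<le> eps * real (card Jp)"
        using eps_pos by (intro mult_left_mono) auto
      then show ?thesis using Pp by linarith
    next
      case False
      then have ay: "a \<bullet> y \<le> b" and ax: "b < a \<bullet> x" by auto
      have "Jq \<subseteq> insert j Jp" unfolding Jq_def Jp_def q_def by auto
      then have cq: "card Jq \<le> card Jp + 1"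
        using finJp card_mono[of "insert j Jp" Jq] card_insert_le[of Jp j]
        by (simp add: card_insert_if split: if_splits)
      define Jx where "Jx = {l. l < k \<and> a \<bullet> p l \<le> a \<bullet> x}"
      have "insert i (insert j Jp) \<subseteq> Jx" unfolding Jx_def Jp_def using ij ax x_def by auto
      moreover have "i \<notin> Jp" "j \<notin> Jp" unfolding Jp_def using ax ij x_def by auto
      moreover have "finite Jx" unfolding Jx_def by auto
      ultimately have cx: "card Jp + 2 \<le> card Jx"
        using card_mono[of Jx "insert i (insert j Jp)"] finJp ij(3) by simp
      have Px: "eps * real (card Jx) \<le> measure M {z. a \<bullet> z \<le> a \<bullet> x}"
        using P a unfolding Prop_def Jx_def by blast
      define an where "an = a /\<^sub>R norm a"
      have nan: "norm an = 1" unfolding an_def using a by simp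
      have sl: "{z. a \<bullet> z \<le> a \<bullet> x} - {z. a \<bullet> z \<le> b} \<subseteq> {z. \<bar>an \<bullet> (z - x)\<bar> \<le> t}"
      proof
        fix z assume z: "z \<in> {z. a \<bullet> z \<le> a \<bullet> x} - {z. a \<bullet> z \<le> b}"
        have "\<bar>a \<bullet> u\<bar> \<le> norm a * norm u" by (rule Cauchy_Schwarz_ineq2)
        then have "a \<bullet> u \<ge> - norm a" using nu by simp
        then have "s * (a \<bullet> u) \<ge> s * (- norm a)" using s by (intro mult_left_mono) auto
        then have "s * (a \<bullet> u) \<ge> - s * norm a" by simp
        then have "b \<ge> a \<bullet> x - s * norm a" using ay unfolding y_def by (simp add: inner_add_right)
        then have "\<bar>a \<bullet> (z - x)\<bar> \<le> s * norm a" using z by (auto simp: inner_diff_right)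
        then have le1: "\<bar>a \<bullet> (z - x)\<bar> / norm a \<le> (s * norm a) / norm a"
          by (rule divide_right_mono) simp
        have "an \<bullet> (z - x) = (a \<bullet> (z - x)) / norm a" unfolding an_def
          by (simp add: divide_inverse_commute)
        then have eq1: "\<bar>an \<bullet> (z - x)\<bar> = \<bar>a \<bullet> (z - x)\<bar> / norm a" by simp
        have eq2: "(s * norm a) / norm a = s" using a by simp
        have "\<bar>an \<bullet> (z - x)\<bar> \<le> s" using le1 unfolding eq1 eq2 .
        then show "z \<in> {z. \<bar>an \<bullet> (z - x)\<bar> \<le> t}" using s by simp
      qed
      have "measure M ({z. a \<bullet> z \<le> a \<bullet> x} - {z. a \<bullet> z \<le> b}) \<le> measure M {z. \<bar>an \<bullet> (z - x)\<bar> \<le> t}"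
        by (rule finite_measure_mono[OF sl closed_sets[OF slab_closed]])
      also have "\<dots> < eps" by (rule t(2)[OF nan])
      finally have "measure M {z. a \<bullet> z \<le> a \<bullet> x} - measure M {z. a \<bullet> z \<le> b} < eps"
        using finite_measure_Diff[of "{z. a \<bullet> z \<le> a \<bullet> x}" "{z. a \<bullet> z \<le> b}"] ax by fastforce
      moreover have "eps * real (card Jq) \<le> eps * real (card Jx) - eps"
      proof -
        have "real (card Jq) \<le> real (card Jx) - 1" using cq cx by linarith
        then have "eps * real (card Jq) \<le> eps * (real (card Jx) - 1)"
          using eps_pos by (intro mult_left_mono) auto
        then show ?thesis by (simp add: right_diff_distrib)
      qed
      ultimately show ?thesis using Px by linarith
    qed
  qed
  then show ?thesis using cardq by blast
qed

lemma make_inj: "\<exists>q. Prop q \<and> inj_on q {..<k}"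
proof -
  have "\<forall>p. k - card (p ` {..<k}) = n \<longrightarrow> Prop p \<longrightarrow> (\<exists>q. Prop q \<and> inj_on q {..<k})" for n
  proof (induction n rule: less_induct)
    case (less n)
    show ?case
    proof (intro allI impI)
      fix p assume pn: "k - card (p ` {..<k}) = n" and P: "Prop p"
      show "\<exists>q. Prop q \<and> inj_on q {..<k}"
      proof (cases "inj_on p {..<k}")
        case True then show ?thesis using P by blast
      next
        case False
        then obtain i j where ij: "i < k" "j < k" "i \<noteq> j" "p i = p j"
          unfolding inj_on_def by auto
        obtain q where q: "Prop q" "card (q ` {..<k}) = Suc (card (p ` {..<k}))"
          using perturb[OF P ij] by blast
        have "card (q ` {..<k}) \<le> k" using card_image_le[of "{..<k}" q] by simp
        then have "k - card (q ` {..<k}) < n" using q(2) pn by linarith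
        then show ?thesis using less.IH q(1) by blast
      qed
    qed
  qed
  then show ?thesis using prop_exists by blast
qed

end

theorem corollary1:
  fixes M :: "'a::euclidean_space measure" and k :: nat
  assumes "k \<ge> 1"
    and "mass_distribution M"
    and "emeasure M UNIV = 1"
  shows "\<exists>Q :: 'a set. finite Q \<and> card Q = k \<and> gtd M Q \<ge> 1 / real (k * DIM('a) + 1)"
proof -
  have sp: "space M = UNIV" and bor: "sets borel \<subseteq> sets M"
    and nul: "\<forall>S \<in> sets M. aff_dim S < int DIM('a) \<longrightarrow> emeasure M S = 0"
    using assms(2) unfolding mass_distribution_def by auto
  have hyp: "measure M {z. a \<bullet> z = b} = 0" if a: "(a::'a) \<noteq> 0" for a b
  proof -
    have "{z. a \<bullet> z = b} \<in> sets M" using bor borel_closed[OF closed_hyperplane] by blast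
    moreover have "aff_dim {z. a \<bullet> z = b} < int DIM('a)" using a by simp
    ultimately have "emeasure M {z. a \<bullet> z = b} = 0" using nul by blast
    then show ?thesis by (simp add: measure_def)
  qed
  interpret md M k
    by (unfold_locales) (use sp bor assms(1,3) hyp in auto)
  obtain q where q: "Prop q" "inj_on q {..<k}" using make_inj by blast
  define Q where "Q = q ` {..<k}"
  have fQ: "finite Q" and cQ: "card Q = k" unfolding Q_def using q(2) by (auto simp: card_image)
  have "eps \<le> gtd M Q" unfolding gtd_def
  proof (rule cINF_greatest)
    obtain u :: 'a where u: "u \<in> Basis" using nonempty_Basis by blast
    then have "u \<noteq> 0" by auto
    then have "{x. u \<bullet> x \<le> u \<bullet> q 0} \<in> closed_halfspaces" unfolding closed_halfspaces_def by blast
    moreover have "q 0 \<in> {x. u \<bullet> x \<le> u \<bullet> q 0} \<inter> Q" unfolding Q_def using assms(1) by auto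
    ultimately show "{h \<in> closed_halfspaces. h \<inter> Q \<noteq> {}} \<noteq> {}" by blast
  next
    fix h assume h: "h \<in> {h \<in> closed_halfspaces. h \<inter> Q \<noteq> {}}"
    then obtain a b where ab: "h = {x. a \<bullet> x \<le> b}" "(a::'a) \<noteq> 0"
      unfolding closed_halfspaces_def by auto
    have hQ: "h \<inter> Q = q ` {l. l < k \<and> a \<bullet> q l \<le> b}" unfolding Q_def ab by auto
    have "card (h \<inter> Q) = card {l. l < k \<and> a \<bullet> q l \<le> b}"
      unfolding hQ by (rule card_image) (rule inj_on_subset[OF q(2)], auto)
    moreover have "card (h \<inter> Q) > 0" using h fQ by (simp add: card_gt_0_iff)
    moreover have "eps * real (card {l. l < k \<and> a \<bullet> q l \<le> b}) \<le> measure M h"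
      using q(1) ab unfolding Prop_def by blast
    ultimately show "eps \<le> measure M h / real (card (h \<inter> Q))"
      by (simp add: pos_le_divide_eq mult.commute)
  qed
  then show ?thesis using fQ cQ unfolding eps_def by blast
qed

end
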